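(* Let $\mathbb{F}\in\{\mathbb{R},\mathbb{C}\}$, let $n\geq 1$, and equip $M_n(\mathbb{F})$ with a norm $\|\cdot\|$. Let $f,g\colon GL_n(\mathbb{F})\to GL_n(\mathbb{F})$ be mappings, at least one of which is open (with respect to the topology of $GL_n(\mathbb{F})$ as a subspace of $M_n(\mathbb{F})$). Let $A,B\in M_n(\mathbb{F})$. Then for every $\varepsilon>0$ there exist invertible matrices $A_\varepsilon,B_\varepsilon\in GL_n(\mathbb{F})$, each with a simple spectrum, such that $\|A-A_\varepsilon\|<\varepsilon$, $\|B-B_\varepsilon\|<\varepsilon$, and the product $f(A_\varepsilon)g(B_\varepsilon)$ has a simple spectrum.
   Context: $M_n(\mathbb{F})$ is the space of $n\times n$ matrices over $\mathbb{F}$ and $GL_n(\mathbb{F})$ the group of invertible ones; all norms on $M_n(\mathbb{F})$ induce the same topology. A matrix has a simple spectrum if all its eigenvalues (the roots in $\mathbb{C}$ of its characteristic polynomial) have algebraic multiplicity one, i.e. are pairwise distinct. A mapping is open if it sends open sets to open sets. The mappings $f,g$ are not assumed to be continuous or homomorphisms. *)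

theory Defs
  imports "HOL-Analysis.Analysis" "HOL-Computational_Algebra.Polynomial"
begin

definition charpoly :: "'a::comm_ring_1^'n^'n \<Rightarrow> 'a poly" where
  "charpoly A = det (\<chi> i j. (if i = j then [:0, 1:] else 0) - [:A $ i $ j:])"

text \<open>Entries are embedded into the
  complex numbers via emb (complex_of_real for real matrices, id for complex).\<close>
definition simple_spectrum :: "('a::comm_ring_1 \<Rightarrow> complex) \<Rightarrow> 'a^'n^'n \<Rightarrow> bool" where
  "simple_spectrum emb A \<longleftrightarrow>
     (let p = charpoly (\<chi> i j. emb (A $ i $ j)) in
       \<forall>z. poly p z = 0 \<longrightarrow> order z p = 1)"

definition is_matrix_norm :: "('a::real_normed_field^'n^'n \<Rightarrow> real) \<Rightarrow> bool" where
  "is_matrix_norm N \<longleftrightarrow>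
     (\<forall>A. 0 \<le> N A) \<and> (\<forall>A. N A = 0 \<longleftrightarrow> A = 0) \<and>
     (\<forall>A B. N (A + B) \<le> N A + N B) \<and>
     (\<forall>c A. N (\<chi> i j. c * A $ i $ j) = norm c * N A)"

definition GL :: "('a::semiring_1^'n^'n) set" where
  "GL = {A. invertible A}"

definition maps_GL :: "('a::semiring_1^'n^'n \<Rightarrow> 'a^'n^'n) \<Rightarrow> bool" where
  "maps_GL f \<longleftrightarrow> f ` GL \<subseteq> GL"

definition open_on_GL :: "('a::{semiring_1,topological_space}^'n^'n \<Rightarrow> 'a^'n^'n) \<Rightarrow> bool" where
  "open_on_GL f \<longleftrightarrow>
     (\<forall>U. openin (top_of_set GL) U \<longrightarrow> openin (top_of_set GL) (f ` U))"

end

theory Submission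
  imports Defs
begin


definition cpf :: "('v::real_normed_vector \<Rightarrow> complex) \<Rightarrow> bool" where
  "cpf f \<longleftrightarrow> real_polynomial_function (\<lambda>x. Re (f x)) \<and> real_polynomial_function (\<lambda>x. Im (f x))"

lemma cpf_const[intro,simp]: "cpf (\<lambda>x. c)"
  by (simp add: cpf_def real_polynomial_function.intros(2))
lemma cpf_add[intro]: "cpf f \<Longrightarrow> cpf g \<Longrightarrow> cpf (\<lambda>x. f x + g x)"
  by (auto simp: cpf_def intro!: real_polynomial_function.intros(3))
lemma cpf_mult[intro]: "cpf f \<Longrightarrow> cpf g \<Longrightarrow> cpf (\<lambda>x. f x * g x)"
  by (auto simp: cpf_def intro!: real_polynomial_function_diff real_polynomial_function.intros(3) real_polynomial_function.intros(4))
lemma cpf_minus[intro]: "cpf f \<Longrightarrow> cpf (\<lambda>x. - f x)"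
  by (auto simp: cpf_def)
lemma cpf_diff[intro]: "cpf f \<Longrightarrow> cpf g \<Longrightarrow> cpf (\<lambda>x. f x - g x)"
  by (auto simp: cpf_def)
lemma cpf_sum: "finite I \<Longrightarrow> (\<And>i. i\<in>I \<Longrightarrow> cpf (\<lambda>x. f x i)) \<Longrightarrow> cpf (\<lambda>x. sum (f x) I)"
  by (induct I rule: finite_induct) auto
lemma cpf_prod: "finite I \<Longrightarrow> (\<And>i. i\<in>I \<Longrightarrow> cpf (\<lambda>x. f x i)) \<Longrightarrow> cpf (\<lambda>x. prod (f x) I)"
  by (induct I rule: finite_induct) auto
lemma cpf_linear: "bounded_linear f \<Longrightarrow> cpf f"
  unfolding cpf_def
  by (auto intro!: real_polynomial_function.intros(1) bounded_linear_compose[OF bounded_linear_Re]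
      bounded_linear_compose[OF bounded_linear_Im])

lemma cpf_cont: assumes "cpf f" shows "continuous_on S f"
proof -
  have "polynomial_function f"
    using assms unfolding polynomial_function_iff_Basis_inner cpf_def
    by (auto simp: Basis_complex_def inner_complex_def)
  then show ?thesis by (rule continuous_on_polymonial_function)
qed

definition ppf :: "('v::real_normed_vector \<Rightarrow> complex poly) \<Rightarrow> bool" where
  "ppf F \<longleftrightarrow> (\<forall>k. cpf (\<lambda>x. coeff (F x) k))"

lemma ppf_const[intro,simp]: "ppf (\<lambda>x. p)"
  by (simp add: ppf_def)
lemma ppf_pCons[intro]: "cpf c \<Longrightarrow> ppf F \<Longrightarrow> ppf (\<lambda>x. pCons (c x) (F x))"
  unfolding ppf_def coeff_pCons by (intro allI, case_tac k) auto
lemma ppf_add[intro]: "ppf F \<Longrightarrow> ppf G \<Longrightarrow> ppf (\<lambda>x. F x + G x)"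
  unfolding ppf_def by auto
lemma ppf_diff[intro]: "ppf F \<Longrightarrow> ppf G \<Longrightarrow> ppf (\<lambda>x. F x - G x)"
  unfolding ppf_def by auto
lemma ppf_mult[intro]: "ppf F \<Longrightarrow> ppf G \<Longrightarrow> ppf (\<lambda>x. F x * G x)"
  unfolding ppf_def coeff_mult by (auto intro!: cpf_sum)
lemma ppf_sum: "finite I \<Longrightarrow> (\<And>i. i\<in>I \<Longrightarrow> ppf (\<lambda>x. f x i)) \<Longrightarrow> ppf (\<lambda>x. sum (f x) I)"
  by (induct I rule: finite_induct) auto
lemma ppf_prod: "finite I \<Longrightarrow> (\<And>i. i\<in>I \<Longrightarrow> ppf (\<lambda>x. f x i)) \<Longrightarrow> ppf (\<lambda>x. prod (f x) I)"
  by (induct I rule: finite_induct) auto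
lemma ppf_pderiv[intro]: "ppf F \<Longrightarrow> ppf (\<lambda>x. pderiv (F x))"
  unfolding ppf_def coeff_pderiv by auto

lemma cpf_vanish:
  fixes Q :: "'v::real_normed_vector \<Rightarrow> complex"
  assumes "cpf Q" "r > 0" "\<And>y. y \<in> ball a r \<Longrightarrow> Q y = 0"
  shows "Q x = 0"
proof -
  have line: "polynomial_function (\<lambda>t::real. a + t *\<^sub>R (x - a))"
    by (intro polynomial_function_add[OF polynomial_function_const] polynomial_function_mult[OF polynomial_function_id polynomial_function_const])
  have npos: "norm (x - a) + 1 > 0" by (simp add: add_nonneg_pos)
  define d where "d = r / (norm (x - a) + 1)"
  have d: "d > 0" using assms(2) npos unfolding d_def by simp
  have inball: "a + t *\<^sub>R (x - a) \<in> ball a r" if "t \<in> {-d<..<d}" for t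
  proof -
    have "\<bar>t\<bar> * norm (x - a) \<le> \<bar>t\<bar> * (norm (x - a) + 1)" by (simp add: mult_left_mono)
    also have "\<dots> < d * (norm (x - a) + 1)"
      using that npos by (intro mult_strict_right_mono) auto
    also have "\<dots> = r" unfolding d_def using npos by simp
    finally show ?thesis by (simp add: dist_norm)
  qed
  have zero: "h x = 0" if rp: "real_polynomial_function h" and hz: "\<And>y. y \<in> ball a r \<Longrightarrow> h y = 0" for h
  proof -
    have "real_polynomial_function (h \<circ> (\<lambda>t::real. a + t *\<^sub>R (x - a)))"
      by (rule real_polynomial_function_compose[OF line rp])
    then obtain c m where g: "(h \<circ> (\<lambda>t::real. a + t *\<^sub>R (x - a))) = (\<lambda>t. \<Sum>i\<le>m. c i * t^i)"
      using real_polynomial_function_imp_sum by blast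
    have "{-d<..<d} \<subseteq> {t. (\<Sum>i\<le>m. c i * t^i) = 0}"
    proof
      fix t assume "t \<in> {-d<..<d}"
      then have "h (a + t *\<^sub>R (x - a)) = 0" using hz inball by blast
      then show "t \<in> {t. (\<Sum>i\<le>m. c i * t^i) = 0}" using fun_cong[OF g, of t] by simp
    qed
    moreover have "infinite {-d<..<d}" using infinite_Ioo[of "-d" d] d by simp
    ultimately have "infinite {t. (\<Sum>i\<le>m. c i * t^i) = 0}"
      using finite_subset by blast
    then have "\<forall>k\<le>m. c k = 0" using polyfun_finite_roots[of c m] by auto
    then have "(\<Sum>i\<le>m. c i * (1::real)^i) = 0" by simp
    then show "h x = 0" using fun_cong[OF g, of 1] by simp
  qed
  have "Re (Q x) = 0" by (rule zero[of "\<lambda>y. Re (Q y)", simplified]) (use assms in \<open>auto simp: cpf_def\<close>)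
  moreover have "Im (Q x) = 0" by (rule zero[of "\<lambda>y. Im (Q y)", simplified]) (use assms in \<open>auto simp: cpf_def\<close>)
  ultimately show ?thesis by (simp add: complex_eq_iff)
qed



definition cmat :: "('a \<Rightarrow> complex) \<Rightarrow> 'a^'n^'n \<Rightarrow> complex^'n^'n" where
  "cmat emb A = (\<chi> i j. emb (A $ i $ j))"

definition qpol :: "('n \<Rightarrow> nat) \<Rightarrow> complex poly \<Rightarrow> 'n + 'n \<Rightarrow> complex poly" where
  "qpol e p r = (case r of Inl i \<Rightarrow> monom 1 (e i) * p | Inr j \<Rightarrow> monom 1 (e j) * pderiv p)"

definition Eidx :: "('n::finite \<Rightarrow> nat) \<Rightarrow> 'n + 'n \<Rightarrow> nat" where
  "Eidx e c = (case c of Inl k \<Rightarrow> e k | Inr k \<Rightarrow> CARD('n) + e k)"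

definition sylv :: "('n::finite \<Rightarrow> nat) \<Rightarrow> complex poly \<Rightarrow> complex^('n+'n)^('n+'n)" where
  "sylv e p = (\<chi> c r. coeff (qpol e p r) (Eidx e c))"

definition Qf :: "('a::comm_ring_1 \<Rightarrow> complex) \<Rightarrow> ('n::finite \<Rightarrow> nat) \<Rightarrow> 'a^'n^'n \<Rightarrow> complex" where
  "Qf emb e A = det (sylv e (charpoly (cmat emb A))) * det (cmat emb A)"

lemma cpf_det:
  fixes M :: "'v::real_normed_vector \<Rightarrow> complex^'m::finite^'m"
  assumes "\<And>i j. cpf (\<lambda>x. M x $ i $ j)"
  shows "cpf (\<lambda>x. det (M x))"
  unfolding det_def
  by (intro cpf_sum cpf_mult cpf_prod assms cpf_const finite_Collect_subsets) auto

lemma ppf_charpoly: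
  fixes emb :: "'a::real_normed_vector \<Rightarrow> complex"
  assumes "bounded_linear emb"
  shows "ppf (\<lambda>A::'a^'n::finite^'n. charpoly (cmat emb A))"
proof -
  have ent: "cpf (\<lambda>A::'a^'n^'n. emb (A $ i $ j))" for i j
    by (intro cpf_linear bounded_linear_compose[OF assms]
        bounded_linear_compose[OF bounded_linear_vec_nth bounded_linear_vec_nth])
  have fac: "ppf (\<lambda>A::'a^'n^'n. (if i = j then [:0, 1:] else 0) - [:emb (A $ i $ j):])" for i j
    by (intro ppf_diff ppf_const ppf_pCons ent)
  show ?thesis
    unfolding charpoly_def det_def cmat_def vec_lambda_beta
    by (intro ppf_sum ppf_mult ppf_prod ppf_const fac finite_Collect_subsets) auto
qed

lemma cpf_Qf:
  fixes emb :: "'a::{real_normed_vector,comm_ring_1} \<Rightarrow> complex"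
  assumes "bounded_linear emb"
  shows "cpf (Qf emb (e::'n::finite \<Rightarrow> nat))"
proof -
  have P: "ppf (\<lambda>A::'a^'n^'n. charpoly (cmat emb A))" by (rule ppf_charpoly[OF assms])
  have ent: "cpf (\<lambda>A::'a^'n^'n. emb (A $ i $ j))" for i j
    by (intro cpf_linear bounded_linear_compose[OF assms]
        bounded_linear_compose[OF bounded_linear_vec_nth bounded_linear_vec_nth])
  have "ppf (\<lambda>A::'a^'n^'n. qpol e (charpoly (cmat emb A)) r)" for r
    unfolding qpol_def by (cases r) (auto intro!: ppf_mult P ppf_pderiv)
  then have "cpf (\<lambda>A::'a^'n^'n. sylv e (charpoly (cmat emb A)) $ c $ r)" for c r
    unfolding sylv_def ppf_def by simp
  then show ?thesis
    unfolding Qf_def[abs_def]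
    by (intro cpf_mult cpf_det) (auto simp: cmat_def ent)
qed



lemma deg_cmult_le: "degree (q::'a::comm_ring_1 poly) \<le> n \<Longrightarrow> degree ((of_int k :: 'a poly) * q) \<le> n"
  using degree_mult_le[of "of_int k :: 'a poly" q] by simp

lemma degree_charpoly: "degree (charpoly (A::'a::comm_ring_1^'n::finite^'n)) \<le> CARD('n)"
proof -
  define X where "X = (\<chi> i j. ((if i = j then [:0, 1:] else 0) - [:A $ i $ j:] :: 'a poly))"
  have fac: "degree (X $ i $ j) \<le> 1" for i j
    unfolding X_def by (auto intro: order.trans[OF degree_diff_le])
  have trm: "degree (of_int (sign p) * (\<Prod>i\<in>UNIV. X $ i $ p i)) \<le> CARD('n)" for p
  proof -
    have "degree (\<Prod>i\<in>UNIV. X $ i $ p i) \<le> (\<Sum>i\<in>UNIV. degree (X $ i $ p i))"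
      using degree_prod_sum_le[of UNIV "\<lambda>i. X $ i $ p i"] by (simp add: o_def)
    also have "\<dots> \<le> (\<Sum>i\<in>(UNIV::'n set). 1)" by (rule sum_mono) (rule fac)
    finally show ?thesis by (intro deg_cmult_le) simp
  qed
  have "degree (det X) \<le> CARD('n)" unfolding det_def
    by (rule degree_sum_le) (simp_all add: trm)
  moreover have "charpoly A = det X" by (simp add: charpoly_def X_def)
  ultimately show ?thesis by simp
qed

lemma Eidx_bij:
  assumes e: "bij_betw e (UNIV::'n::finite set) {0..<CARD('n)}"
  shows "bij_betw (Eidx e) (UNIV::('n+'n) set) {0..<2 * CARD('n)}"
proof (rule bij_betw_imageI)
  have inj: "inj e" using e bij_betw_def by blast
  have lt: "e i < CARD('n)" for i using e by (auto simp: bij_betw_def)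
  show "inj_on (Eidx e) UNIV"
  proof (rule inj_onI)
    fix x y assume "Eidx e x = Eidx e y"
    then show "x = y" using lt inj
      by (cases x; cases y) (auto simp: Eidx_def dest: injD, (metis lt not_add_less1)+)
  qed
  show "Eidx e ` UNIV = {0..<2 * CARD('n)}"
  proof
    show "Eidx e ` UNIV \<subseteq> {0..<2 * CARD('n)}"
      using lt by (auto simp: Eidx_def split: sum.split, (metis lt less_le_trans mult_2 le_add1 add_less_cancel_left)+)
  next
    show "{0..<2 * CARD('n)} \<subseteq> Eidx e ` UNIV"
    proof
      fix k assume k: "k \<in> {0..<2 * CARD('n)}"
      show "k \<in> Eidx e ` UNIV"
      proof (cases "k < CARD('n)")
        case True
        then have "k \<in> e ` UNIV" using e by (auto simp: bij_betw_def)
        then obtain i where "e i = k" by auto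
        then have "Eidx e (Inl i) = k" by (simp add: Eidx_def)
        then show ?thesis by (metis rangeI)
      next
        case False
        then have "k - CARD('n) \<in> {0..<CARD('n)}" using k by auto
        then have "k - CARD('n) \<in> e ` UNIV" using e by (auto simp: bij_betw_def)
        then obtain i where "e i = k - CARD('n)" by auto
        then have "Eidx e (Inr i) = k" using False by (simp add: Eidx_def)
        then show ?thesis by (metis rangeI)
      qed
    qed
  qed
qed

lemma sum_Eidx:
  assumes e: "bij_betw e (UNIV::'n::finite set) {0..<CARD('n)}"
    and deg: "degree P < 2 * CARD('n)"
  shows "(\<Sum>c\<in>UNIV. coeff P (Eidx e c) * z ^ Eidx e c) = poly P (z::complex)"
proof -
  have "(\<Sum>c\<in>UNIV. coeff P (Eidx e c) * z ^ Eidx e c) = (\<Sum>k\<in>{0..<2 * CARD('n)}. coeff P k * z ^ k)"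
    using sum.reindex_bij_betw[OF Eidx_bij[OF e], of "\<lambda>k. coeff P k * z ^ k"] by simp
  also have "\<dots> = (\<Sum>k\<le>degree P. coeff P k * z ^ k)"
    using deg by (intro sum.mono_neutral_right) (auto simp: coeff_eq_0)
  also have "\<dots> = poly P z" by (simp add: poly_altdef)
  finally show ?thesis .
qed

lemma degree_qpol:
  assumes e: "bij_betw e (UNIV::'n::finite set) {0..<CARD('n)}"
    and deg: "degree p \<le> CARD('n)"
  shows "degree (qpol e p r) < 2 * CARD('n)"
proof -
  have lt: "e i < CARD('n)" for i using e by (auto simp: bij_betw_def)
  have "degree (monom (1::complex) (e i) * q) < 2 * CARD('n)" if "degree q \<le> CARD('n)" for i q
  proof -
    have "degree (monom (1::complex) (e i) * q) \<le> e i + degree q"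
      by (rule order.trans[OF degree_mult_le]) (simp add: degree_monom_le)
    then show ?thesis using lt[of i] that by linarith
  qed
  then show ?thesis using deg unfolding qpol_def
    by (cases r) (auto simp: degree_pderiv)
qed



locale embhom =
  fixes emb :: "'a::real_normed_field \<Rightarrow> complex"
  assumes bl: "bounded_linear emb"
    and mult: "\<And>x y. emb (x * y) = emb x * emb y"
    and one: "emb 1 = 1"
begin

lemma lin: "linear emb" using bl by (rule bounded_linear.linear)

lemma zero[simp]: "emb 0 = 0" using linear_0[OF lin] .

lemma emb_sum: "emb (sum f S) = (\<Sum>x\<in>S. emb (f x))"
  using linear_sum[OF lin] .

lemma emb_prod: "emb (prod f S) = (\<Prod>x\<in>S. emb (f x))"
proof (cases "finite S")
  case True then show ?thesis by (induct S rule: finite_induct) (auto simp: one mult)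
qed (simp add: one)

lemma emb_of_int[simp]: "emb (of_int k) = of_int k"
proof -
  have "emb (of_int k) = emb (real_of_int k *\<^sub>R 1)"
    by (metis of_real_def of_real_of_int_eq)
  also have "\<dots> = real_of_int k *\<^sub>R 1" using linear_scale[OF lin] one by simp
  finally show ?thesis by (metis of_real_def of_real_of_int_eq)
qed

lemma emb_of_nat[simp]: "emb (of_nat k) = of_nat k"
  using emb_of_int[of "int k"] by simp

lemma det_cmat: "det (cmat emb A) = emb (det A)"
  unfolding det_def cmat_def by (simp add: emb_sum emb_prod mult)

end

lemma det_nz_ker:
  fixes M :: "'b::field^'m::finite^'m"
  assumes "det M \<noteq> 0" "M *v x = 0"
  shows "x = 0"
proof -
  have "invertible M" using assms(1) invertible_det_nz by blast
  then have "inj ((*v) M)" by (rule inj_matrix_vector_mult)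
  then show ?thesis using assms(2) vec.inj_iff_eq_0 by blast
qed

lemma poly_qpol:
  "poly (qpol e p r) z = (case r of Inl i \<Rightarrow> z ^ e i * poly p z | Inr j \<Rightarrow> z ^ e j * poly (pderiv p) z)"
  unfolding qpol_def by (cases r) (auto simp: poly_monom)

lemma (in embhom) QfA:
  fixes A :: "'a^'n::finite^'n"
  assumes e: "bij_betw e (UNIV::'n set) {0..<CARD('n)}"
    and Q: "Qf emb e A \<noteq> 0"
  shows "simple_spectrum emb A \<and> invertible A"
proof
  define p where "p = charpoly (cmat emb A)"
  have dS: "det (sylv e p) \<noteq> 0" and dA: "det (cmat emb A) \<noteq> 0"
    using Q by (auto simp: Qf_def p_def)
  show "invertible A"
    using dA by (simp add: det_cmat invertible_det_nz) (metis zero)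
  have degp: "degree p \<le> CARD('n)" unfolding p_def by (rule degree_charpoly)
  have pnz: "p \<noteq> 0"
  proof
    assume "p = 0"
    then have "sylv e p = 0" by (simp add: sylv_def qpol_def vec_eq_iff split: sum.split)
    then have "sylv e p *v (vec 1) = 0" by (simp add: vec_eq_iff matrix_vector_mult_def)
    from det_nz_ker[OF dS this] show False by (simp add: vec_eq_iff)
  qed
  have "(0::nat) \<in> e ` UNIV" using e by (auto simp: bij_betw_def)
  then have "\<exists>i0. e i0 = 0" by (metis imageE)
  then obtain i0 where i0: "e i0 = 0" by blast
  show "simple_spectrum emb A"
    unfolding simple_spectrum_def Let_def
  proof (intro allI impI, fold cmat_def p_def)
    fix z assume pz: "poly p z = 0"
    show "order z p = 1"
    proof (rule ccontr)
      assume ne1: "order z p \<noteq> 1"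
      have "order z p \<noteq> 0" using pz pnz order_root by blast
      with ne1 order_pderiv[OF pnz pz] have "order z (pderiv p) \<noteq> 0" by auto
      then have p'z: "poly (pderiv p) z = 0" using order_root by blast
      define w where "w = (\<chi> c. z ^ Eidx e c)"
      have "transpose (sylv e p) *v w = 0"
      proof -
        have "(\<Sum>c\<in>UNIV. coeff (qpol e p r) (Eidx e c) * z ^ Eidx e c) = 0" for r
          using sum_Eidx[OF e degree_qpol[OF e degp]] pz p'z
          by (simp add: poly_qpol split: sum.split)
        then show ?thesis
          by (simp add: vec_eq_iff matrix_vector_mult_def transpose_def sylv_def w_def)
      qed
      from det_nz_ker[OF _ this] dS have "w = 0" by (simp add: det_transpose)
      then have "w $ Inl i0 = 0" by simp
      then show False by (simp add: w_def Eidx_def i0)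
    qed
  qed
qed



lemma pderiv_root_nz:
  fixes x :: "'n::finite \<Rightarrow> complex"
  assumes inj: "inj x"
  shows "poly (pderiv (\<Prod>j\<in>UNIV. [:- x j, 1:])) (x i) \<noteq> 0"
proof -
  define R where "R = (\<Prod>j\<in>UNIV - {i}. [:- x j, 1:])"
  have eq: "(\<Prod>j\<in>UNIV. [:- x j, 1:]) = [:- x i, 1:] * R"
    unfolding R_def by (rule prod.remove) auto
  have d1: "pderiv [:- x i, 1:] = 1" by (simp add: pderiv_pCons)
  have "poly (pderiv ([:- x i, 1:] * R)) (x i) = poly R (x i)"
    unfolding pderiv_mult d1 poly_add poly_mult by simp
  then have "poly (pderiv (\<Prod>j\<in>UNIV. [:- x j, 1:])) (x i) = poly R (x i)"
    by (simp only: eq)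
  also have "\<dots> = (\<Prod>j\<in>UNIV - {i}. x i - x j)"
    unfolding R_def by (simp add: poly_prod)
  also have "\<dots> \<noteq> 0"
    using inj by (auto simp: inj_eq)
  finally show ?thesis .
qed

lemma (in embhom) QfM:
  assumes e: "bij_betw e (UNIV::'n::finite set) {0..<CARD('n)}"
  shows "\<exists>M::'a^'n^'n. Qf emb e M \<noteq> 0"
proof -
  define x where "x i = (of_nat (e i + 1) :: complex)" for i
  have inje: "inj e" using e bij_betw_def by blast
  have injx: "inj x" using inje by (auto simp: x_def inj_def)
  have lt: "e i < CARD('n)" for i using e by (auto simp: bij_betw_def)
  define M where "M = (\<chi> i j. if i = j then (of_nat (e i + 1) :: 'a) else 0)"
  have e1: "emb (1 + of_nat k) = 1 + of_nat k" for k using emb_of_nat[of "Suc k"] by simp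
  have CM: "cmat emb M = (\<chi> i j. if i = j then x i else 0)"
    by (simp add: cmat_def M_def x_def vec_eq_iff e1)
  have xnz: "x i \<noteq> 0" for i
    unfolding x_def by (metis of_nat_eq_0_iff add_eq_0_iff_both_eq_0 one_neq_zero)
  have dM: "det (cmat emb M) \<noteq> 0"
    unfolding CM by (subst det_diagonal) (auto simp: xnz)
  define p where "p = charpoly (cmat emb M)"
  have peq: "p = (\<Prod>i\<in>UNIV. [:- x i, 1:])"
    unfolding p_def charpoly_def CM by (subst det_diagonal) auto
  have degp: "degree p \<le> CARD('n)" unfolding p_def by (rule degree_charpoly)
  have proot: "poly p (x i) = 0" for i
    unfolding peq poly_prod by (rule prod_zero[of UNIV _]) (auto intro: bexI[of _ i])
  have p'nz: "poly (pderiv p) (x i) \<noteq> 0" for i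
    unfolding peq by (rule pderiv_root_nz[OF injx])
  have pnz: "p \<noteq> 0" using p'nz by force
  have npos: "CARD('n) > 0" by simp
  have "det (sylv e p) \<noteq> 0"
  proof -
    have "\<forall>y. sylv e p *v y = 0 \<longrightarrow> y = 0"
    proof (intro allI impI)
      fix y assume y: "sylv e p *v y = 0"
      then have a: "(\<Sum>r\<in>UNIV. coeff (qpol e p r) (Eidx e c) * y $ r) = 0" for c
        by (auto simp: vec_eq_iff matrix_vector_mult_def sylv_def)
      define P where "P = (\<Sum>r\<in>UNIV. smult (y $ r) (qpol e p r))"
      have P0: "P = 0"
      proof (rule poly_eqI)
        fix k
        have ck: "coeff P k = (\<Sum>r\<in>UNIV. coeff (qpol e p r) k * y $ r)"
          by (simp add: P_def coeff_sum mult.commute)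
        show "coeff P k = coeff 0 k"
        proof (cases "k < 2 * CARD('n)")
          case True
          then have "k \<in> Eidx e ` UNIV" using Eidx_bij[OF e] by (auto simp: bij_betw_def)
          then obtain c where "k = Eidx e c" by blast
          then show ?thesis using ck a by simp
        next
          case False
          then have "coeff (qpol e p r) k = 0" for r
            using degree_qpol[OF e degp, of r] by (intro coeff_eq_0) linarith
          then show ?thesis using ck by simp
        qed
      qed
      define u where "u = (\<Sum>i\<in>UNIV. smult (y $ Inl i) (monom 1 (e i)))"
      define v where "v = (\<Sum>i\<in>UNIV. smult (y $ Inr i) (monom 1 (e i)))"
      have "P = u * p + v * pderiv p"
      proof -
        have "P = (\<Sum>i\<in>UNIV. smult (y $ Inl i) (qpol e p (Inl i))) + (\<Sum>i\<in>UNIV. smult (y $ Inr i) (qpol e p (Inr i)))"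
          unfolding P_def UNIV_Plus_UNIV[symmetric] by (subst sum.Plus) (auto simp: o_def)
        also have "\<dots> = u * p + v * pderiv p"
          by (simp add: u_def v_def qpol_def sum_distrib_right mult_smult_left)
        finally show ?thesis .
      qed
      with P0 have uv: "u * p + v * pderiv p = 0" by simp
      have vroot: "poly v (x i) = 0" for i
      proof -
        have "poly (u * p + v * pderiv p) (x i) = 0" using uv by simp
        then have "poly v (x i) * poly (pderiv p) (x i) = 0" using proot[of i] by simp
        then show ?thesis using p'nz[of i] by simp
      qed
      have v0: "v = 0"
      proof (rule ccontr)
        assume vnz: "v \<noteq> 0"
        have "degree v \<le> CARD('n) - 1"
          unfolding v_def
        proof (rule degree_sum_le)
          fix i show "degree (smult (y $ Inr i) (monom 1 (e i))) \<le> CARD('n) - 1"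
            using lt[of i] degree_monom_le[of "1::complex" "e i"]
            by (metis (no_types) degree_smult_le le_diff_conv2 less_Suc_eq_le npos order.trans Suc_leI Suc_diff_1 add_leE)
        qed simp
        moreover have "card (range x) \<le> card {z. poly v z = 0}"
          by (rule card_mono) (auto simp: poly_roots_finite[OF vnz] vroot)
        moreover have "card (range x) = CARD('n)" using injx by (simp add: card_image)
        ultimately show False using card_poly_roots_bound[OF vnz] npos by linarith
      qed
      then have "u * p = 0" using uv by simp
      then have u0: "u = 0" using pnz by simp
      have cu: "coeff u (e i) = y $ Inl i" for i
      proof -
        have "coeff u (e i) = (\<Sum>j\<in>UNIV. if j = i then y $ Inl j else 0)"
          unfolding u_def coeff_sum by (intro sum.cong) (auto simp: coeff_monom inj_eq[OF inje])
        then show ?thesis by simp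
      qed
      have cv: "coeff v (e i) = y $ Inr i" for i
      proof -
        have "coeff v (e i) = (\<Sum>j\<in>UNIV. if j = i then y $ Inr j else 0)"
          unfolding v_def coeff_sum by (intro sum.cong) (auto simp: coeff_monom inj_eq[OF inje])
        then show ?thesis by simp
      qed
      show "y = 0"
      proof (subst vec_eq_iff, intro allI)
        fix r show "y $ r = 0 $ r"
          using cu cv u0 v0 by (cases r) (metis coeff_0 zero_index)+
      qed
    qed
    then have "invertible (sylv e p)"
      using invertible_left_inverse matrix_left_invertible_ker by blast
    then show ?thesis using invertible_det_nz by blast
  qed
  then have "Qf emb e M \<noteq> 0" using dM by (simp add: Qf_def p_def)
  then show ?thesis by blast
qed



lemma N_sum:
  assumes N: "is_matrix_norm N"
  shows "N (sum f S) \<le> (\<Sum>x\<in>S. N (f x))"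
proof -
  have N0: "N 0 = 0" using N by (simp add: is_matrix_norm_def)
  have tri: "N (a + b) \<le> N a + N b" for a b using N by (simp add: is_matrix_norm_def)
  show ?thesis
  proof (cases "finite S")
    case True
    then show ?thesis
    proof (induct S rule: finite_induct)
      case empty then show ?case by (simp add: N0)
    next
      case (insert x F)
      have "N (sum f (insert x F)) = N (f x + sum f F)" using insert(1,2) by simp
      also have "\<dots> \<le> N (f x) + N (sum f F)" by (rule tri)
      also have "\<dots> \<le> N (f x) + (\<Sum>y\<in>F. N (f y))" using insert(3) by simp
      also have "\<dots> = (\<Sum>y\<in>insert x F. N (f y))" using insert(1,2) by simp
      finally show ?case .
    qed
  next
    case False then show ?thesis by (simp add: N0)
  qed
qed

lemma norm_bound:
  fixes N :: "'a::real_normed_field^'n::finite^'n \<Rightarrow> real"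
  assumes N: "is_matrix_norm N"
  shows "\<exists>K\<ge>0. \<forall>X. N X \<le> K * norm X"
proof -
  define E where "E i j = ((\<chi> a b. if a = i \<and> b = j then (1::'a) else 0) :: 'a^'n^'n)" for i j
  define K where "K = (\<Sum>i\<in>UNIV. \<Sum>j\<in>UNIV. N (E i j))"
  have Npos: "N Z \<ge> 0" for Z using N by (simp add: is_matrix_norm_def)
  have hom: "N (\<chi> a b. c * E i j $ a $ b) = norm c * N (E i j)" for c i j
    using N by (simp add: is_matrix_norm_def)
  have "N X \<le> K * norm X" for X
  proof -
    have dec: "X = (\<Sum>i\<in>UNIV. \<Sum>j\<in>UNIV. (\<chi> a b. X $ i $ j * E i j $ a $ b))"
    proof -
      have inner: "(\<Sum>j\<in>UNIV. X $ i $ j * E i j $ a $ b) = (if i = a then X $ a $ b else 0)" for a b i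
      proof -
        have "(\<Sum>j\<in>UNIV. X $ i $ j * E i j $ a $ b) = (\<Sum>j\<in>UNIV. if j = b then (if i = a then X $ a $ b else 0) else 0)"
          by (rule sum.cong) (auto simp: E_def)
        also have "\<dots> = (if i = a then X $ a $ b else 0)" by simp
        finally show ?thesis .
      qed
      have "(\<Sum>i\<in>UNIV. \<Sum>j\<in>UNIV. (\<chi> a b. X $ i $ j * E i j $ a $ b)) $ a $ b = X $ a $ b" for a b
      proof -
        have "(\<Sum>i\<in>UNIV. \<Sum>j\<in>UNIV. (\<chi> a b. X $ i $ j * E i j $ a $ b)) $ a $ b
            = (\<Sum>i\<in>UNIV. \<Sum>j\<in>UNIV. X $ i $ j * E i j $ a $ b)"
          by (simp only: sum_component vec_lambda_beta)
        also have "\<dots> = (\<Sum>i\<in>UNIV. if i = a then X $ a $ b else 0)" by (simp only: inner)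
        also have "\<dots> = X $ a $ b" by simp
        finally show ?thesis .
      qed
      then show ?thesis by (simp add: vec_eq_iff)
    qed
    have "N X \<le> (\<Sum>i\<in>UNIV. N (\<Sum>j\<in>UNIV. (\<chi> a b. X $ i $ j * E i j $ a $ b)))"
      by (subst dec) (rule N_sum[OF N])
    also have "\<dots> \<le> (\<Sum>i\<in>UNIV. \<Sum>j\<in>UNIV. N (\<chi> a b. X $ i $ j * E i j $ a $ b))"
      by (intro sum_mono N_sum[OF N])
    also have "\<dots> = (\<Sum>i\<in>UNIV. \<Sum>j\<in>UNIV. norm (X $ i $ j) * N (E i j))"
      by (simp add: hom)
    also have "\<dots> \<le> (\<Sum>i\<in>UNIV. \<Sum>j\<in>UNIV. N (E i j) * norm X)"
    proof (intro sum_mono)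
      fix i j
      have "norm (X $ i $ j) \<le> norm X"
        using Finite_Cartesian_Product.norm_nth_le[of "X $ i" j] Finite_Cartesian_Product.norm_nth_le[of X i] by linarith
      then show "norm (X $ i $ j) * N (E i j) \<le> N (E i j) * norm X"
        using Npos[of "E i j"] by (metis mult.commute mult_left_mono)
    qed
    also have "\<dots> = K * norm X" by (simp only: K_def sum_distrib_right)
    finally show ?thesis .
  qed
  moreover have "K \<ge> 0" unfolding K_def by (intro sum_nonneg Npos)
  ultimately show ?thesis by blast
qed

lemma comp_cont: "continuous_on UNIV (\<lambda>Y::'a::real_normed_field^'n::finite^'m::finite. Y $ i $ k)"
  by (intro linear_continuous_on bounded_linear_compose[OF bounded_linear_vec_nth bounded_linear_vec_nth])

lemma rmult_cont: "continuous_on UNIV (\<lambda>Y::'a::real_normed_field^'n::finite^'n. Y ** C)"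
  unfolding matrix_matrix_mult_def
  by (intro continuous_on_vec_lambda continuous_on_sum continuous_on_mult comp_cont continuous_on_const)

lemma lmult_cont: "continuous_on UNIV (\<lambda>Y::'a::real_normed_field^'n::finite^'n. C ** Y)"
  unfolding matrix_matrix_mult_def
  by (intro continuous_on_vec_lambda continuous_on_sum continuous_on_mult comp_cont continuous_on_const)

lemma dense_right:
  fixes S :: "('a::real_normed_field^'n::finite^'n) set"
  assumes dense: "\<And>W. open W \<Longrightarrow> W \<noteq> {} \<Longrightarrow> W \<inter> S \<noteq> {}"
    and SGL: "S \<subseteq> GL" and C: "invertible C" and Op: "open Op" "X0 \<in> Op"
  shows "\<exists>X. X \<in> Op \<and> X \<in> GL \<and> X ** C \<in> S"
proof -
  obtain Ci where CCi: "C ** Ci = mat 1" "Ci ** C = mat 1" using C invertible_def by blast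
  define W where "W = (\<lambda>Y. Y ** Ci) -` Op"
  have "open W" unfolding W_def by (intro open_vimage Op rmult_cont)
  moreover have "X0 ** C \<in> W" using Op(2) CCi
    by (simp add: W_def matrix_mul_assoc[symmetric])
  ultimately obtain Y where Y: "Y \<in> W" "Y \<in> S" using dense by blast
  have iCi: "invertible Ci" using CCi invertible_def by blast
  have iY: "invertible Y" using Y(2) SGL by (auto simp: GL_def)
  have "Y ** Ci \<in> GL"
    using invertible_mult[OF iY iCi] by (simp add: GL_def)
  moreover have "(Y ** Ci) ** C = Y" using CCi by (simp add: matrix_mul_assoc[symmetric])
  ultimately show ?thesis using Y by (auto simp: W_def)
qed

lemma dense_left:
  fixes S :: "('a::real_normed_field^'n::finite^'n) set"
  assumes dense: "\<And>W. open W \<Longrightarrow> W \<noteq> {} \<Longrightarrow> W \<inter> S \<noteq> {}"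
    and SGL: "S \<subseteq> GL" and C: "invertible C" and Op: "open Op" "X0 \<in> Op"
  shows "\<exists>X. X \<in> Op \<and> X \<in> GL \<and> C ** X \<in> S"
proof -
  obtain Ci where CCi: "C ** Ci = mat 1" "Ci ** C = mat 1" using C invertible_def by blast
  define W where "W = (\<lambda>Y. Ci ** Y) -` Op"
  have "open W" unfolding W_def by (intro open_vimage Op lmult_cont)
  moreover have "C ** X0 \<in> W" using Op(2) CCi
    by (simp add: W_def matrix_mul_assoc)
  ultimately obtain Y where Y: "Y \<in> W" "Y \<in> S" using dense by blast
  have iCi: "invertible Ci" using CCi invertible_def by blast
  have iY: "invertible Y" using Y(2) SGL by (auto simp: GL_def)
  have "Ci ** Y \<in> GL"
    using invertible_mult[OF iCi iY] by (simp add: GL_def)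
  moreover have "C ** (Ci ** Y) = Y" using CCi by (simp add: matrix_mul_assoc)
  ultimately show ?thesis using Y by (auto simp: W_def)
qed



theorem (in embhom) main:
  fixes N :: "'a^'n::finite^'n \<Rightarrow> real" and f g :: "'a^'n^'n \<Rightarrow> 'a^'n^'n"
  assumes N: "is_matrix_norm N" and mf: "maps_GL f" and mg: "maps_GL g"
    and op: "open_on_GL f \<or> open_on_GL g" and eps: "\<epsilon> > 0"
  shows "\<exists>Ae Be. invertible Ae \<and> invertible Be \<and>
               simple_spectrum emb Ae \<and> simple_spectrum emb Be \<and>
               N (A - Ae) < \<epsilon> \<and> N (B - Be) < \<epsilon> \<and>
               simple_spectrum emb (f Ae ** g Be)"
proof -
  obtain e where e: "bij_betw e (UNIV::'n set) {0..<CARD('n)}"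
    using ex_bij_betw_finite_nat[of "UNIV::'n set"] by auto
  define S where "S = {X::'a^'n^'n. Qf emb e X \<noteq> 0}"
  have SP: "simple_spectrum emb X \<and> invertible X" if "X \<in> S" for X
    using QfA[OF e] that by (auto simp: S_def)
  have SGL: "S \<subseteq> GL" using SP by (auto simp: GL_def)
  have cQ: "continuous_on UNIV (Qf emb e :: 'a^'n^'n \<Rightarrow> complex)"
    by (rule cpf_cont[OF cpf_Qf[OF bl]])
  have Sopen: "open S" unfolding S_def
    by (rule open_Collect_neq[OF cQ continuous_on_const])
  obtain M :: "'a^'n^'n" where M: "Qf emb e M \<noteq> 0" using QfM[OF e] by blast
  have dense: "W \<inter> S \<noteq> {}" if W: "open W" "W \<noteq> {}" for W
  proof
    assume WS: "W \<inter> S = {}"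
    obtain a where a: "a \<in> W" using W by blast
    then obtain r where r: "r > 0" "ball a r \<subseteq> W" using W open_contains_ball by blast
    have "Qf emb e M = 0"
    proof (rule cpf_vanish[OF cpf_Qf[OF bl] r(1)])
      fix y assume "y \<in> ball a r"
      then have "y \<notin> S" using r WS by blast
      then show "Qf emb e y = 0" by (simp add: S_def)
    qed
    with M show False by simp
  qed
  obtain K where K: "K \<ge> 0" "\<And>X. N X \<le> K * norm X" using norm_bound[OF N] by blast
  define r where "r = \<epsilon> / (K + 1)"
  have r: "r > 0" using eps K by (simp add: r_def)
  have close: "N (Z - Y) < \<epsilon>" if "Y \<in> ball Z r" for Y Z
  proof -
    have d: "norm (Z - Y) < r" using that by (simp add: dist_norm)
    have "N (Z - Y) \<le> K * norm (Z - Y)" by (rule K(2))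
    also have "\<dots> \<le> (K + 1) * norm (Z - Y)" by (simp add: mult_right_mono)
    also have "\<dots> < (K + 1) * r" using d K(1) by (intro mult_strict_left_mono) auto
    also have "\<dots> = \<epsilon>" using K(1) by (simp add: r_def)
    finally show ?thesis .
  qed
  have ballS: "ball Z r \<inter> S \<noteq> {}" for Z
    using dense[of "ball Z r"] r by auto
  have openU: "openin (top_of_set GL) (ball Z r \<inter> S)" for Z
    using SGL Sopen by (intro open_subset) auto
  from op show ?thesis
  proof
    assume of: "open_on_GL f"
    obtain Be where Be: "Be \<in> ball B r" "Be \<in> S" using ballS[of B] by blast
    have C: "invertible (g Be)" using mg SGL Be(2) by (auto simp: maps_GL_def GL_def)
    have "openin (top_of_set GL) (f ` (ball A r \<inter> S))"
      using of openU unfolding open_on_GL_def by blast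
    then obtain Op where Op: "open Op" "f ` (ball A r \<inter> S) = GL \<inter> Op"
      by (auto simp: openin_open)
    obtain A0 where A0: "A0 \<in> ball A r \<inter> S" using ballS[of A] by blast
    have "f A0 \<in> Op" using A0 Op(2) by blast
    from dense_right[OF dense SGL C Op(1) this]
    obtain X where X: "X \<in> Op" "X \<in> GL" "X ** g Be \<in> S" by blast
    then have "X \<in> f ` (ball A r \<inter> S)" using Op(2) by blast
    then obtain Ae where Ae: "Ae \<in> ball A r" "Ae \<in> S" "X = f Ae" by blast
    show ?thesis
      using SP[OF Ae(2)] SP[OF Be(2)] close[OF Ae(1)] close[OF Be(1)] SP[OF X(3)] Ae(3) by blast
  next
    assume og: "open_on_GL g"
    obtain Ae where Ae: "Ae \<in> ball A r" "Ae \<in> S" using ballS[of A] by blast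
    have C: "invertible (f Ae)" using mf SGL Ae(2) by (auto simp: maps_GL_def GL_def)
    have "openin (top_of_set GL) (g ` (ball B r \<inter> S))"
      using og openU unfolding open_on_GL_def by blast
    then obtain Op where Op: "open Op" "g ` (ball B r \<inter> S) = GL \<inter> Op"
      by (auto simp: openin_open)
    obtain B0 where B0: "B0 \<in> ball B r \<inter> S" using ballS[of B] by blast
    have "g B0 \<in> Op" using B0 Op(2) by blast
    from dense_left[OF dense SGL C Op(1) this]
    obtain X where X: "X \<in> Op" "X \<in> GL" "f Ae ** X \<in> S" by blast
    then have "X \<in> g ` (ball B r \<inter> S)" using Op(2) by blast
    then obtain Be where Be: "Be \<in> ball B r" "Be \<in> S" "X = g Be" by blast
    show ?thesis
      using SP[OF Ae(2)] SP[OF Be(2)] close[OF Ae(1)] close[OF Be(1)] SP[OF X(3)] Be(3) by blast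
  qed
qed

theorem proposition1:
  shows "(\<forall>(N :: real^'n^'n \<Rightarrow> real) f g A B \<epsilon>.
            is_matrix_norm N \<and> maps_GL f \<and> maps_GL g \<and>
            (open_on_GL f \<or> open_on_GL g) \<and> \<epsilon> > 0 \<longrightarrow>
            (\<exists>Ae Be. invertible Ae \<and> invertible Be \<and>
               simple_spectrum complex_of_real Ae \<and> simple_spectrum complex_of_real Be \<and>
               N (A - Ae) < \<epsilon> \<and> N (B - Be) < \<epsilon> \<and>
               simple_spectrum complex_of_real (f Ae ** g Be)))
       \<and>
         (\<forall>(N :: complex^'n^'n \<Rightarrow> real) f g A B \<epsilon>.
            is_matrix_norm N \<and> maps_GL f \<and> maps_GL g \<and>
            (open_on_GL f \<or> open_on_GL g) \<and> \<epsilon> > 0 \<longrightarrow>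
            (\<exists>Ae Be. invertible Ae \<and> invertible Be \<and>
               simple_spectrum id Ae \<and> simple_spectrum id Be \<and>
               N (A - Ae) < \<epsilon> \<and> N (B - Be) < \<epsilon> \<and>
               simple_spectrum id (f Ae ** g Be)))"
proof -
  interpret R: embhom complex_of_real
    by (rule embhom.intro) (simp_all add: bounded_linear_of_real)
  interpret C: embhom "id :: complex \<Rightarrow> complex"
    by (rule embhom.intro) (simp_all add: id_def bounded_linear_ident)
  show ?thesis
    using R.main C.main by blast
qed

end
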